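(* Let a group $G$ act on a set $U$, and let $\mathcal{F}$ be a $G$-invariant family of finite subsets of $U$ whose cardinalities are uniformly bounded, i.e. $\max_{F\in\mathcal{F}}|F|<\infty$. Let $X\subseteq U$ be a finite system of representatives for $\mathcal{F}$, i.e. $X\cap F\neq\emptyset$ for every $F\in\mathcal{F}$. Then there exists a $G$-invariant system of representatives $Y\subseteq U$ for $\mathcal{F}$ (i.e. $gY=Y$ for all $g\in G$ and $Y\cap F\neq\emptyset$ for all $F\in\mathcal{F}$) such that $|Y|\le |X|\cdot\max_{F\in\mathcal{F}}|F|$.
   Context: A family $\mathcal{F}$ here is an unordered family, i.e. a set of subsets of $U$. It is $G$-invariant if $gF=\{gf\mid f\in F\}\in\mathcal{F}$ for all $g\in G$ and $F\in\mathcal{F}$. *)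

theory Defs
  imports "HOL-Algebra.Group_Action"
begin

end

theory Submission
  imports Defs
begin

definition orbH :: "('g \<Rightarrow> 'a \<Rightarrow> 'a) \<Rightarrow> 'g set \<Rightarrow> 'a \<Rightarrow> 'a set" where
  "orbH \<phi> H x = (\<lambda>h. \<phi> h x) ` H"

context group_action
begin

lemma grp: "group G"
  using group_hom group_hom.axioms(1) by blast

lemma one_act: "x \<in> E \<Longrightarrow> \<phi> \<one> x = x"
  by (metis id_eq_one restrict_apply')

lemma comp: "g1 \<in> carrier G \<Longrightarrow> g2 \<in> carrier G \<Longrightarrow> x \<in> E \<Longrightarrow> \<phi> (g1 \<otimes> g2) x = \<phi> g1 (\<phi> g2 x)"
  using composition_rule by blast

lemma act_closed: "g \<in> carrier G \<Longrightarrow> x \<in> E \<Longrightarrow> \<phi> g x \<in> E"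
  using element_image by blast

lemma inv_act: "g \<in> carrier G \<Longrightarrow> x \<in> E \<Longrightarrow> \<phi> (inv g) (\<phi> g x) = x"
proof -
  assume g: "g \<in> carrier G" and x: "x \<in> E"
  interpret group G by (rule grp)
  have "\<phi> (inv g) (\<phi> g x) = \<phi> (inv g \<otimes> g) x" using comp[of "inv g" g x] g x by simp
  also have "\<dots> = x" using g x one_act by simp
  finally show ?thesis .
qed

lemma act_inv: "g \<in> carrier G \<Longrightarrow> x \<in> E \<Longrightarrow> \<phi> g (\<phi> (inv g) x) = x"
proof -
  assume g: "g \<in> carrier G" and x: "x \<in> E"
  interpret group G by (rule grp)
  have "\<phi> g (\<phi> (inv g) x) = \<phi> (g \<otimes> inv g) x" using comp[of g "inv g" x] g x by simp
  also have "\<dots> = x" using g x one_act by simp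
  finally show ?thesis .
qed

lemma neumann_step:
  assumes H: "subgroup H G"
  shows "finite F \<Longrightarrow> F \<subseteq> E \<Longrightarrow> finite X \<Longrightarrow> \<forall>h\<in>H. \<phi> h ` F \<inter> X \<noteq> {} \<Longrightarrow>
    \<exists>X'. finite X' \<and> (\<forall>h\<in>H. \<phi> h ` {f\<in>F. finite (orbH \<phi> H f)} \<inter> X' \<noteq> {})"
proof (induction "card F" arbitrary: F X rule: less_induct)
  case less
  interpret group G by (rule grp)
  have Hc: "H \<subseteq> carrier G" using H subgroup.subset by blast
  show ?case
  proof (cases "\<forall>f\<in>F. finite (orbH \<phi> H f)")
    case True
    then have "{f\<in>F. finite (orbH \<phi> H f)} = F" by auto
    thus ?thesis using less by metis
  next
    case False
    then obtain f where f: "f\<in>F" "infinite (orbH \<phi> H f)" by auto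
    have "\<not> orbH \<phi> H f \<subseteq> X" using f less.prems(3) finite_subset by blast
    then obtain g0 where g0: "g0 \<in> H" "\<phi> g0 f \<notin> X" unfolding orbH_def by auto
    define a where "a x = (SOME h. h\<in>H \<and> \<phi> h f = x)" for x
    define X2 where "X2 = X \<union> (\<Union>x\<in>X. \<phi> (a x) ` \<phi> (inv g0) ` X)"
    have fin: "finite X2" unfolding X2_def using less.prems(3) by auto
    have cov: "\<forall>h\<in>H. \<phi> h ` (F - {f}) \<inter> X2 \<noteq> {}"
    proof
      fix h assume h: "h\<in>H"
      show "\<phi> h ` (F - {f}) \<inter> X2 \<noteq> {}"
      proof (cases "\<phi> h f \<in> X")
        case False
        from less.prems(4) h obtain f' where "f'\<in>F" "\<phi> h f' \<in> X" by auto
        then show ?thesis using False unfolding X2_def by auto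
      next
        case True
        define x where "x = \<phi> h f"
        have "\<exists>h'. h'\<in>H \<and> \<phi> h' f = x" using h x_def by auto
        hence ax: "a x \<in> H" "\<phi> (a x) f = x" unfolding a_def by (metis (mono_tags, lifting) someI_ex)+
        define s where "s = inv (a x) \<otimes> h"
        have s: "s \<in> H" unfolding s_def using H ax h
          by (simp add: subgroup.m_closed subgroup.m_inv_closed)
        have fE: "f \<in> E" using f less.prems(2) by auto
        have sf: "\<phi> s f = f"
        proof -
          have "\<phi> s f = \<phi> (inv (a x)) (\<phi> h f)" unfolding s_def
            using comp[of "inv (a x)" h f] ax h Hc fE by auto
          also have "\<dots> = \<phi> (inv (a x)) (\<phi> (a x) f)" using ax x_def by simp
          also have "\<dots> = f" using inv_act[of "a x" f] ax(1) Hc fE by blast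
          finally show ?thesis .
        qed
        have g0s: "g0 \<otimes> s \<in> H" using g0 s H by (simp add: subgroup.m_closed)
        have "\<phi> (g0 \<otimes> s) f = \<phi> g0 f" using comp[of g0 s f] g0 s Hc fE sf by auto
        with less.prems(4) g0s g0 obtain f' where f': "f'\<in>F" "\<phi> (g0 \<otimes> s) f' \<in> X" "f' \<noteq> f"
          by fastforce
        have f'E: "f' \<in> E" using f' less.prems(2) by auto
        have hs: "h = a x \<otimes> s" unfolding s_def using ax h Hc
          by (simp add: m_assoc[symmetric] subsetD)
        have "\<phi> h f' = \<phi> (a x) (\<phi> s f')" using hs comp[of "a x" s f'] ax s Hc f'E by (metis subsetD)
        also have "\<phi> s f' = \<phi> (inv g0) (\<phi> g0 (\<phi> s f'))" using inv_act[of g0 "\<phi> s f'"] g0 Hc act_closed[of s f'] s f'E by (metis subsetD)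
        also have "\<phi> g0 (\<phi> s f') = \<phi> (g0 \<otimes> s) f'" using comp[of g0 s f'] g0 s Hc f'E by (metis subsetD)
        finally have "\<phi> h f' \<in> \<phi> (a x) ` \<phi> (inv g0) ` X" using f' by blast
        moreover have "x \<in> X" using True x_def by simp
        ultimately have "\<phi> h f' \<in> X2" unfolding X2_def by blast
        then show ?thesis using f' by blast
      qed
    qed
    have "card (F - {f}) < card F" using f less.prems(1) by (meson card_Diff1_less)
    then obtain X' where X': "finite X'" "\<forall>h\<in>H. \<phi> h ` {f'\<in>F - {f}. finite (orbH \<phi> H f')} \<inter> X' \<noteq> {}"
      using less.hyps[of "F - {f}" X2] less.prems fin cov by blast
    have "{f'\<in>F - {f}. finite (orbH \<phi> H f')} = {f'\<in>F. finite (orbH \<phi> H f')}" using f by auto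
    then show ?thesis using X' by auto
  qed
qed

lemma stab_subgroup:
  assumes "\<Omega> \<subseteq> E"
  shows "subgroup {g\<in>carrier G. \<forall>w\<in>\<Omega>. \<phi> g w = w} G"
proof -
  interpret group G by (rule grp)
  show ?thesis
  proof (rule subgroupI)
    have "\<one> \<in> {g \<in> carrier G. \<forall>w\<in>\<Omega>. \<phi> g w = w}"
      using one_act assms by auto
    then show "{g \<in> carrier G. \<forall>w\<in>\<Omega>. \<phi> g w = w} \<noteq> {}" by blast
  next
    fix g assume g: "g \<in> {g \<in> carrier G. \<forall>w\<in>\<Omega>. \<phi> g w = w}"
    show "inv g \<in> {g \<in> carrier G. \<forall>w\<in>\<Omega>. \<phi> g w = w}"
    proof (safe)
      fix w assume w: "w \<in> \<Omega>"
      have "\<phi> (inv g) w = \<phi> (inv g) (\<phi> g w)" using g w by simp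
      also have "\<dots> = w" using inv_act g w assms by blast
      finally show "\<phi> (inv g) w = w" .
    qed (use g in simp_all)
  next
    fix g h assume g: "g \<in> {g \<in> carrier G. \<forall>w\<in>\<Omega>. \<phi> g w = w}"
      and h: "h \<in> {g \<in> carrier G. \<forall>w\<in>\<Omega>. \<phi> g w = w}"
    show "g \<otimes> h \<in> {g \<in> carrier G. \<forall>w\<in>\<Omega>. \<phi> g w = w}"
    proof (safe)
      fix w assume w: "w \<in> \<Omega>"
      have "\<phi> (g \<otimes> h) w = \<phi> g (\<phi> h w)" using comp[of g h w] g h w assms by blast
      then show "\<phi> (g \<otimes> h) w = w" using g h w by simp
    qed (use g h in simp_all)
  qed blast
qed

lemma finQ:
  assumes "finite \<Omega>" "\<forall>g\<in>carrier G. \<phi> g ` \<Omega> \<subseteq> \<Omega>"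
  shows "finite ((\<lambda>g. restrict (\<phi> g) \<Omega>) ` carrier G)"
proof -
  have "(\<lambda>g. restrict (\<phi> g) \<Omega>) ` carrier G \<subseteq> \<Omega> \<rightarrow>\<^sub>E \<Omega>" using assms(2) by (auto simp: image_subset_iff)
  moreover have "finite (\<Omega> \<rightarrow>\<^sub>E \<Omega>)" by (rule finite_PiE) (use assms(1) in auto)
  ultimately show ?thesis using finite_subset by blast
qed

lemma fin_index:
  assumes "finite \<Omega>" "\<Omega> \<subseteq> E" "\<forall>g\<in>carrier G. \<phi> g ` \<Omega> \<subseteq> \<Omega>"
  shows "\<exists>R. finite R \<and> R \<subseteq> carrier G \<and>
     (\<forall>g\<in>carrier G. \<exists>r\<in>R. inv r \<otimes> g \<in> {g\<in>carrier G. \<forall>w\<in>\<Omega>. \<phi> g w = w})"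
proof -
  interpret group G by (rule grp)
  define Q where "Q = (\<lambda>g. restrict (\<phi> g) \<Omega>) ` carrier G"
  have fQ: "finite Q" unfolding Q_def using finQ assms by blast
  define rep where "rep q = (SOME g. g \<in> carrier G \<and> restrict (\<phi> g) \<Omega> = q)" for q
  have rep: "rep q \<in> carrier G \<and> restrict (\<phi> (rep q)) \<Omega> = q" if "q \<in> Q" for q
  proof -
    have "\<exists>g. g \<in> carrier G \<and> restrict (\<phi> g) \<Omega> = q" using that unfolding Q_def by auto
    then show ?thesis unfolding rep_def by (rule someI_ex)
  qed
  show ?thesis
  proof (intro exI conjI ballI)
    show "finite (rep ` Q)" using fQ by simp
    show "rep ` Q \<subseteq> carrier G" using rep by auto
    fix g assume g: "g \<in> carrier G"
    define r where "r = rep (restrict (\<phi> g) \<Omega>)"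
    have qin: "restrict (\<phi> g) \<Omega> \<in> Q" using g Q_def by auto
    have r: "r \<in> carrier G" "restrict (\<phi> r) \<Omega> = restrict (\<phi> g) \<Omega>" using rep[OF qin] r_def by auto
    have "\<forall>w\<in>\<Omega>. \<phi> (inv r \<otimes> g) w = w"
    proof
      fix w assume w: "w \<in> \<Omega>"
      have wE: "w \<in> E" using w assms by auto
      have "\<phi> r w = \<phi> g w" using r(2) w by (metis restrict_apply')
      then have "\<phi> (inv r \<otimes> g) w = \<phi> (inv r) (\<phi> r w)" using comp[of "inv r" g w] r g wE by simp
      then show "\<phi> (inv r \<otimes> g) w = w" using inv_act r wE by simp
    qed
    then show "\<exists>r\<in>rep ` Q. inv r \<otimes> g \<in> {g \<in> carrier G. \<forall>w\<in>\<Omega>. \<phi> g w = w}"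
      using r g qin r_def by auto
  qed
qed

lemma fin_orbit:
  assumes "finite \<Omega>" "\<Omega> \<subseteq> E" "\<forall>g\<in>carrier G. \<phi> g ` \<Omega> \<subseteq> \<Omega>" "f \<in> E"
    and "finite (orbH \<phi> {g\<in>carrier G. \<forall>w\<in>\<Omega>. \<phi> g w = w} f)"
  shows "finite (orbH \<phi> (carrier G) f)"
proof -
  interpret group G by (rule grp)
  obtain R where R: "finite R" "R \<subseteq> carrier G"
    "\<forall>g\<in>carrier G. \<exists>r\<in>R. inv r \<otimes> g \<in> {g\<in>carrier G. \<forall>w\<in>\<Omega>. \<phi> g w = w}"
    using fin_index[OF assms(1-3)] by blast
  have "orbH \<phi> (carrier G) f \<subseteq> (\<Union>r\<in>R. \<phi> r ` orbH \<phi> {g\<in>carrier G. \<forall>w\<in>\<Omega>. \<phi> g w = w} f)"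
  proof
    fix y assume "y \<in> orbH \<phi> (carrier G) f"
    then obtain g where g: "g \<in> carrier G" "y = \<phi> g f" unfolding orbH_def by auto
    obtain r where r: "r \<in> R" "inv r \<otimes> g \<in> {g\<in>carrier G. \<forall>w\<in>\<Omega>. \<phi> g w = w}" using R g by blast
    have rc: "r \<in> carrier G" using r R by auto
    have "g = r \<otimes> (inv r \<otimes> g)" using rc g by (simp add: m_assoc[symmetric])
    then have "\<phi> g f = \<phi> r (\<phi> (inv r \<otimes> g) f)" using comp[of r "inv r \<otimes> g" f] rc g assms(4) by simp
    moreover have "\<phi> (inv r \<otimes> g) f \<in> orbH \<phi> {g\<in>carrier G. \<forall>w\<in>\<Omega>. \<phi> g w = w} f"
      unfolding orbH_def using r(2) by (rule imageI)
    ultimately have "y \<in> \<phi> r ` orbH \<phi> {g\<in>carrier G. \<forall>w\<in>\<Omega>. \<phi> g w = w} f"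
      using g(2) by simp
    then show "y \<in> (\<Union>r\<in>R. \<phi> r ` orbH \<phi> {g\<in>carrier G. \<forall>w\<in>\<Omega>. \<phi> g w = w} f)"
      using r(1) by blast
  qed
  moreover have "finite (\<Union>r\<in>R. \<phi> r ` orbH \<phi> {g\<in>carrier G. \<forall>w\<in>\<Omega>. \<phi> g w = w} f)"
    using R assms(5) by simp
  ultimately show ?thesis using finite_subset by blast
qed

lemma orb_closed:
  assumes "g \<in> carrier G" "f \<in> E" "w \<in> orbH \<phi> (carrier G) f"
  shows "\<phi> g w \<in> orbH \<phi> (carrier G) f"
proof -
  interpret group G by (rule grp)
  obtain h where h: "h \<in> carrier G" "w = \<phi> h f" using assms(3) unfolding orbH_def by auto
  have "\<phi> g w = \<phi> (g \<otimes> h) f" using comp[of g h f] assms h by simp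
  then show ?thesis using assms h unfolding orbH_def by auto
qed

lemma orb_self: "f \<in> E \<Longrightarrow> f \<in> orbH \<phi> (carrier G) f"
proof -
  assume f: "f \<in> E"
  interpret group G by (rule grp)
  show ?thesis using one_act[OF f] unfolding orbH_def by (metis one_closed rev_image_eqI)
qed

lemma orb_sub: "f \<in> E \<Longrightarrow> orbH \<phi> (carrier G) f \<subseteq> E"
  unfolding orbH_def using act_closed by auto

lemma fin_part:
  assumes "finite F" "F \<subseteq> E" "finite X" "\<forall>g\<in>carrier G. \<phi> g ` F \<inter> X \<noteq> {}"
  shows "\<forall>g\<in>carrier G. \<phi> g ` {f\<in>F. finite (orbH \<phi> (carrier G) f)} \<inter> X \<noteq> {}"
proof (rule ccontr)
  interpret group G by (rule grp)
  define F0 where "F0 = {f\<in>F. finite (orbH \<phi> (carrier G) f)}"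
  define \<Omega> where "\<Omega> = (\<Union>f\<in>F0. orbH \<phi> (carrier G) f)"
  have fO: "finite \<Omega>" unfolding \<Omega>_def F0_def using assms(1) by auto
  have OE: "\<Omega> \<subseteq> E" unfolding \<Omega>_def F0_def using orb_sub assms(2) by blast
  have Oinv: "\<forall>g\<in>carrier G. \<phi> g ` \<Omega> \<subseteq> \<Omega>" unfolding \<Omega>_def F0_def
    using orb_closed assms(2) by blast
  have F0O: "F0 \<subseteq> \<Omega>" unfolding \<Omega>_def F0_def using orb_self assms(2) by blast
  define N where "N = {g\<in>carrier G. \<forall>w\<in>\<Omega>. \<phi> g w = w}"
  have NG: "subgroup N G" unfolding N_def using stab_subgroup OE by blast
  assume "\<not> (\<forall>g\<in>carrier G. \<phi> g ` {f\<in>F. finite (orbH \<phi> (carrier G) f)} \<inter> X \<noteq> {})"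
  then obtain g1 where g1: "g1 \<in> carrier G" "\<phi> g1 ` F0 \<inter> X = {}" unfolding F0_def by blast
  define F1 where "F1 = F - F0"
  define X1 where "X1 = \<phi> (inv g1) ` X"
  have cov: "\<forall>n\<in>N. \<phi> n ` F1 \<inter> X1 \<noteq> {}"
  proof
    fix n assume n: "n \<in> N"
    have nc: "n \<in> carrier G" using n N_def by auto
    obtain f where f: "f \<in> F" "\<phi> (g1 \<otimes> n) f \<in> X" using assms(4) g1 nc by blast
    have fE: "f \<in> E" using f assms(2) by auto
    have e: "\<phi> (g1 \<otimes> n) f = \<phi> g1 (\<phi> n f)" using comp[of g1 n f] g1 nc fE by simp
    have "f \<notin> F0"
    proof
      assume "f \<in> F0"
      then have "\<phi> n f = f" using F0O n N_def by auto
      then show False using g1 f e \<open>f \<in> F0\<close> by auto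
    qed
    then have "f \<in> F1" using f F1_def by auto
    moreover have "\<phi> n f = \<phi> (inv g1) (\<phi> g1 (\<phi> n f))" using inv_act g1 act_closed nc fE by simp
    ultimately show "\<phi> n ` F1 \<inter> X1 \<noteq> {}" using f e X1_def by auto
  qed
  have pre: "finite F1" "F1 \<subseteq> E" "finite X1" using assms unfolding F1_def X1_def by auto
  obtain X' where X': "finite X'" "\<forall>h\<in>N. \<phi> h ` {f\<in>F1. finite (orbH \<phi> N f)} \<inter> X' \<noteq> {}"
    using neumann_step[OF NG pre cov] by blast
  have "\<one> \<in> N" using NG subgroup.one_closed by fastforce
  then obtain f where f: "f \<in> F1" "finite (orbH \<phi> N f)" using X'(2) by blast
  have "finite (orbH \<phi> (carrier G) f)"
    using fin_orbit[OF fO OE Oinv, of f] f assms(2) F1_def N_def by auto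
  then show False using f F1_def F0_def by auto
qed

lemma card_filter_sum: "finite A \<Longrightarrow> card {x\<in>A. P x} = (\<Sum>x\<in>A. if P x then 1 else 0 :: nat)"
  using sum.inter_filter[of A "\<lambda>_. 1::nat" P] by simp

lemma counting:
  assumes "finite F" "F \<subseteq> E" "finite X" "F \<noteq> {}" "\<forall>f\<in>F. finite (orbH \<phi> (carrier G) f)"
    "\<forall>g\<in>carrier G. \<phi> g ` F \<inter> X \<noteq> {}"
  shows "\<exists>f\<in>F. card (orbH \<phi> (carrier G) f) \<le> card F * card (orbH \<phi> (carrier G) f \<inter> X)"
proof (rule ccontr)
  interpret group G by (rule grp)
  define Orb where "Orb f = orbH \<phi> (carrier G) f" for f
  define \<Omega> where "\<Omega> = (\<Union>f\<in>F. Orb f)"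
  have fO: "finite \<Omega>" unfolding \<Omega>_def Orb_def using assms(1,5) by auto
  have OE: "\<Omega> \<subseteq> E" unfolding \<Omega>_def Orb_def using orb_sub assms(2) by blast
  have Oinv: "\<forall>g\<in>carrier G. \<phi> g ` \<Omega> \<subseteq> \<Omega>" unfolding \<Omega>_def Orb_def
    using orb_closed assms(2) by blast
  have FO: "F \<subseteq> \<Omega>" unfolding \<Omega>_def Orb_def using orb_self assms(2) by blast
  define Q where "Q = (\<lambda>g. restrict (\<phi> g) \<Omega>) ` carrier G"
  have fQ: "finite Q" unfolding Q_def using finQ fO Oinv by blast
  have qF: "q f \<in> Orb f" if "q \<in> Q" "f \<in> F" for q f
  proof -
    obtain g where g: "g \<in> carrier G" "q = restrict (\<phi> g) \<Omega>" using \<open>q \<in> Q\<close> Q_def by auto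
    have "q f = \<phi> g f" using g FO that by auto
    then show ?thesis unfolding Orb_def orbH_def using g by auto
  qed
  have qE: "q w \<in> E" if "q \<in> Q" "w \<in> \<Omega>" for q w
  proof -
    obtain g where g: "g \<in> carrier G" "q = restrict (\<phi> g) \<Omega>" using \<open>q \<in> Q\<close> Q_def by auto
    then show ?thesis using that act_closed OE by auto
  qed
  have qX: "{f\<in>F. q f \<in> X} \<noteq> {}" if "q \<in> Q" for q
  proof -
    obtain g where g: "g \<in> carrier G" "q = restrict (\<phi> g) \<Omega>" using \<open>q \<in> Q\<close> Q_def by auto
    obtain f where "f \<in> F" "\<phi> g f \<in> X" using assms(6) g by blast
    then show ?thesis using g FO by auto
  qed
  have Tmap: "restrict (\<lambda>w. \<phi> a (q w)) \<Omega> \<in> Q" if "a \<in> carrier G" "q \<in> Q" for a q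
  proof -
    obtain g where g: "g \<in> carrier G" "q = restrict (\<phi> g) \<Omega>" using \<open>q \<in> Q\<close> Q_def by auto
    have "restrict (\<lambda>w. \<phi> a (q w)) \<Omega> = restrict (\<phi> (a \<otimes> g)) \<Omega>"
    proof
      fix w show "restrict (\<lambda>w. \<phi> a (q w)) \<Omega> w = restrict (\<phi> (a \<otimes> g)) \<Omega> w"
        using comp[of a g w] g that OE by auto
    qed
    then show ?thesis unfolding Q_def using g that by auto
  qed
  have Tinj: "inj_on (\<lambda>q. restrict (\<lambda>w. \<phi> a (q w)) \<Omega>) Q" if a: "a \<in> carrier G" for a
  proof
    fix q1 q2 assume q: "q1 \<in> Q" "q2 \<in> Q"
      and eq: "restrict (\<lambda>w. \<phi> a (q1 w)) \<Omega> = restrict (\<lambda>w. \<phi> a (q2 w)) \<Omega>"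
    obtain g1 where g1: "g1 \<in> carrier G" "q1 = restrict (\<phi> g1) \<Omega>" using q Q_def by auto
    obtain g2 where g2: "g2 \<in> carrier G" "q2 = restrict (\<phi> g2) \<Omega>" using q Q_def by auto
    show "q1 = q2"
    proof
      fix w show "q1 w = q2 w"
      proof (cases "w \<in> \<Omega>")
        case True
        have "\<phi> a (q1 w) = \<phi> a (q2 w)" using eq True by (metis restrict_apply')
        then show ?thesis using inj_prop[OF a] qE q True by (meson inj_on_eq_iff)
      next
        case False then show ?thesis using g1 g2 by simp
      qed
    qed
  qed
  have fib_le: "card {q\<in>Q. q f = y} \<le> card {q\<in>Q. q f = \<phi> a y}"
    if "f \<in> F" "a \<in> carrier G" for f y a
  proof (rule card_inj_on_le)
    show "inj_on (\<lambda>q. restrict (\<lambda>w. \<phi> a (q w)) \<Omega>) {q\<in>Q. q f = y}"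
      using Tinj[OF that(2)] by (rule inj_on_subset) auto
    show "(\<lambda>q. restrict (\<lambda>w. \<phi> a (q w)) \<Omega>) ` {q\<in>Q. q f = y} \<subseteq> {q\<in>Q. q f = \<phi> a y}"
      using Tmap[OF that(2)] FO that(1) by auto
    show "finite {q\<in>Q. q f = \<phi> a y}" using fQ by simp
  qed
  have fib: "card {q\<in>Q. q f = x} = card {q\<in>Q. q f = f}" if fx: "f \<in> F" "x \<in> Orb f" for f x
  proof -
    obtain a where a: "a \<in> carrier G" "x = \<phi> a f" using fx unfolding Orb_def orbH_def by auto
    have fE: "f \<in> E" using fx assms(2) by auto
    have "card {q\<in>Q. q f = f} \<le> card {q\<in>Q. q f = x}" using fib_le[OF fx(1) a(1), of f] a by simp
    moreover have "card {q\<in>Q. q f = x} \<le> card {q\<in>Q. q f = \<phi> (inv a) x}"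
      using fib_le[OF fx(1), of "inv a" x] a by simp
    moreover have "\<phi> (inv a) x = f" using inv_act a fE by simp
    ultimately show ?thesis by simp
  qed
  have one: "card {q\<in>Q. q f = f} > 0" if "f \<in> F" for f
  proof -
    have "restrict (\<phi> \<one>) \<Omega> \<in> {q\<in>Q. q f = f}"
      using that FO OE one_act Q_def by auto
    then show ?thesis using fQ by (metis (no_types, lifting) card_gt_0_iff empty_iff finite_subset mem_Collect_eq subsetI)
  qed
  have split: "card {q\<in>Q. q f \<in> S} = card S * card {q\<in>Q. q f = f}"
    if "f \<in> F" "S \<subseteq> Orb f" for f S
  proof -
    have fS: "finite S" using that assms(5) Orb_def finite_subset by metis
    have "{q\<in>Q. q f \<in> S} = (\<Union>x\<in>S. {q\<in>Q. q f = x})" by auto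
    then have "card {q\<in>Q. q f \<in> S} = (\<Sum>x\<in>S. card {q\<in>Q. q f = x})"
      using card_UN_disjoint[of S "\<lambda>x. {q\<in>Q. q f = x}"] fS fQ by auto
    also have "\<dots> = (\<Sum>x\<in>S. card {q\<in>Q. q f = f})" using fib that by (meson subsetD sum.cong)
    finally show ?thesis by simp
  qed
  have cQ: "card Q = card (Orb f) * card {q\<in>Q. q f = f}" if "f \<in> F" for f
  proof -
    have "{q\<in>Q. q f \<in> Orb f} = Q" using qF that by auto
    then show ?thesis using split[OF that, of "Orb f"] by simp
  qed
  have cX: "card {q\<in>Q. q f \<in> X} = card (Orb f \<inter> X) * card {q\<in>Q. q f = f}" if "f \<in> F" for f
  proof -
    have "{q\<in>Q. q f \<in> Orb f \<inter> X} = {q\<in>Q. q f \<in> X}" using qF that by auto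
    then show ?thesis using split[OF that, of "Orb f \<inter> X"] by simp
  qed
  have sumQ: "card Q \<le> (\<Sum>f\<in>F. card {q\<in>Q. q f \<in> X})"
  proof -
    have "card Q = (\<Sum>q\<in>Q. 1::nat)" by simp
    also have "\<dots> \<le> (\<Sum>q\<in>Q. card {f\<in>F. q f \<in> X})"
    proof (rule sum_mono)
      fix q assume "q \<in> Q"
      then have ne: "{f\<in>F. q f \<in> X} \<noteq> {}" using qX by blast
      have fin: "finite {f\<in>F. q f \<in> X}" using assms(1) by simp
      have "0 < card {f\<in>F. q f \<in> X}" using ne fin by (simp add: card_gt_0_iff)
      then show "1 \<le> card {f\<in>F. q f \<in> X}" by simp
    qed
    also have "\<dots> = (\<Sum>q\<in>Q. \<Sum>f\<in>F. if q f \<in> X then 1 else 0)"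
      by (rule sum.cong[OF refl]) (rule card_filter_sum[OF assms(1)])
    also have "\<dots> = (\<Sum>f\<in>F. \<Sum>q\<in>Q. if q f \<in> X then 1 else 0)" by (rule sum.swap)
    also have "\<dots> = (\<Sum>f\<in>F. card {q\<in>Q. q f \<in> X})"
      by (rule sum.cong[OF refl]) (rule card_filter_sum[OF fQ, symmetric])
    finally show ?thesis .
  qed
  assume "\<not> (\<exists>f\<in>F. card (orbH \<phi> (carrier G) f) \<le> card F * card (orbH \<phi> (carrier G) f \<inter> X))"
  then have lt: "card F * card (Orb f \<inter> X) < card (Orb f)" if "f \<in> F" for f
    using that Orb_def by auto
  have lt2: "card F * card {q\<in>Q. q f \<in> X} < card Q" if "f \<in> F" for f
  proof -
    have "card F * card {q\<in>Q. q f \<in> X} = (card F * card (Orb f \<inter> X)) * card {q\<in>Q. q f = f}"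
      using cX[OF that] by simp
    also have "\<dots> < card (Orb f) * card {q\<in>Q. q f = f}"
      by (rule mult_strict_right_mono) (use lt[OF that] one[OF that] in auto)
    finally show ?thesis using cQ[OF that] by simp
  qed
  have "card F * card Q \<le> card F * (\<Sum>f\<in>F. card {q\<in>Q. q f \<in> X})"
    using sumQ by simp
  also have "\<dots> = (\<Sum>f\<in>F. card F * card {q\<in>Q. q f \<in> X})" by (simp add: sum_distrib_left)
  also have "\<dots> < (\<Sum>f\<in>F. card Q)"
    using assms(1,4) lt2 by (intro sum_strict_mono) auto
  also have "\<dots> = card F * card Q" by simp
  finally show False by simp
qed

lemma orb_mono: "f \<in> E \<Longrightarrow> w \<in> orbH \<phi> (carrier G) f \<Longrightarrow> orbH \<phi> (carrier G) w \<subseteq> orbH \<phi> (carrier G) f"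
proof
  fix y assume f: "f \<in> E" and w: "w \<in> orbH \<phi> (carrier G) f" and y: "y \<in> orbH \<phi> (carrier G) w"
  obtain g where g: "g \<in> carrier G" "y = \<phi> g w" using y unfolding orbH_def by auto
  show "y \<in> orbH \<phi> (carrier G) f" using orb_closed[OF g(1) f w] g(2) by simp
qed

lemma orb_eq: "f \<in> E \<Longrightarrow> w \<in> orbH \<phi> (carrier G) f \<Longrightarrow> orbH \<phi> (carrier G) w = orbH \<phi> (carrier G) f"
proof -
  assume f: "f \<in> E" and w: "w \<in> orbH \<phi> (carrier G) f"
  interpret group G by (rule grp)
  obtain h where h: "h \<in> carrier G" "w = \<phi> h f" using w unfolding orbH_def by auto
  have wE: "w \<in> E" using h f act_closed by simp
  have "f = \<phi> (inv h) w" using inv_act h f by simp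
  then have "f \<in> orbH \<phi> (carrier G) w" unfolding orbH_def using h by auto
  then show ?thesis using orb_mono[OF f w] orb_mono[OF wE] by blast
qed

end

theorem mainTheorem1:
  fixes G :: "('g, 'b) monoid_scheme" and U :: "'a set" and \<phi> :: "'g \<Rightarrow> 'a \<Rightarrow> 'a"
    and \<F> :: "'a set set" and X :: "'a set"
  assumes act: "group_action G U \<phi>"
    and fam_sub: "\<forall>F\<in>\<F>. F \<subseteq> U"
    and fam_fin: "\<forall>F\<in>\<F>. finite F"
    and fam_inv: "\<forall>g\<in>carrier G. \<forall>F\<in>\<F>. \<phi> g ` F \<in> \<F>"
    and bounded: "\<exists>k::nat. \<forall>F\<in>\<F>. card F \<le> k"
    and X_sub: "X \<subseteq> U" and X_fin: "finite X"
    and X_rep: "\<forall>F\<in>\<F>. X \<inter> F \<noteq> {}"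
  shows "\<exists>Y. Y \<subseteq> U \<and> (\<forall>g\<in>carrier G. \<phi> g ` Y = Y)
             \<and> (\<forall>F\<in>\<F>. Y \<inter> F \<noteq> {})
             \<and> finite Y \<and> card Y \<le> card X * (SUP F\<in>\<F>. card F)"
proof -
  interpret group_action G U \<phi> by (rule act)
  interpret group G by (rule grp)
  define k where "k = (SUP F\<in>\<F>. card F)"
  have bdd: "bdd_above (card ` \<F>)" using bounded by (auto simp: bdd_above_def)
  have cardk: "card F \<le> k" if "F \<in> \<F>" for F
    unfolding k_def using cSUP_upper[OF that bdd] .
  define Orb where "Orb u = orbH \<phi> (carrier G) u" for u
  define Y where "Y = {u\<in>U. finite (Orb u) \<and> card (Orb u) \<le> k * card (Orb u \<inter> X)}"
  have closed: "w \<in> Y" if "u \<in> Y" "w \<in> Orb u" for u w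
  proof -
    have uU: "u \<in> U" using that Y_def by auto
    have "w \<in> U" using orb_sub[OF uU] that Orb_def by auto
    moreover have "Orb w = Orb u" using orb_eq[OF uU] that Orb_def by auto
    ultimately show ?thesis using that Y_def by auto
  qed
  have self: "u \<in> Orb u" if "u \<in> U" for u using orb_self that Orb_def by auto
  have inv: "\<phi> g ` Y = Y" if g: "g \<in> carrier G" for g
  proof
    show "\<phi> g ` Y \<subseteq> Y"
    proof
      fix y assume "y \<in> \<phi> g ` Y"
      then obtain u where u: "u \<in> Y" "y = \<phi> g u" by auto
      have "y \<in> Orb u" using u g unfolding Orb_def orbH_def by auto
      then show "y \<in> Y" using closed u by blast
    qed
    show "Y \<subseteq> \<phi> g ` Y"
    proof
      fix u assume u: "u \<in> Y"
      have uU: "u \<in> U" using u Y_def by auto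
      have "\<phi> (inv\<^bsub>G\<^esub> g) u \<in> Orb u" using g unfolding Orb_def orbH_def by auto
      then have "\<phi> (inv\<^bsub>G\<^esub> g) u \<in> Y" using closed u by blast
      moreover have "u = \<phi> g (\<phi> (inv\<^bsub>G\<^esub> g) u)" using act_inv g uU by simp
      ultimately show "u \<in> \<phi> g ` Y" by blast
    qed
  qed
  have hit: "Y \<inter> F \<noteq> {}" if F: "F \<in> \<F>" for F
  proof -
    have cov: "\<forall>g\<in>carrier G. \<phi> g ` F \<inter> X \<noteq> {}"
    proof
      fix g assume g: "g \<in> carrier G"
      have "\<phi> g ` F \<in> \<F>" using fam_inv g F by blast
      then have "X \<inter> \<phi> g ` F \<noteq> {}" using X_rep by blast
      then show "\<phi> g ` F \<inter> X \<noteq> {}" by (simp add: Int_commute)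
    qed
    have FU: "F \<subseteq> U" "finite F" using fam_sub fam_fin F by auto
    define F0 where "F0 = {f\<in>F. finite (orbH \<phi> (carrier G) f)}"
    have cov0: "\<forall>g\<in>carrier G. \<phi> g ` F0 \<inter> X \<noteq> {}"
      unfolding F0_def using fin_part[OF FU(2) FU(1) X_fin cov] .
    have "\<phi> \<one>\<^bsub>G\<^esub> ` F0 \<inter> X \<noteq> {}" using cov0 by simp
    then have ne: "F0 \<noteq> {}" by blast
    have F0s: "finite F0" "F0 \<subseteq> U" "\<forall>f\<in>F0. finite (orbH \<phi> (carrier G) f)"
      using FU unfolding F0_def by auto
    obtain f where f: "f \<in> F0" "card (Orb f) \<le> card F0 * card (Orb f \<inter> X)"
      using counting[OF F0s(1,2) X_fin ne F0s(3) cov0] unfolding Orb_def by blast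
    have "F0 \<subseteq> F" unfolding F0_def by auto
    then have "card F0 \<le> card F" using card_mono[OF FU(2)] by blast
    then have "card F0 \<le> k" using cardk[OF F] by (rule le_trans)
    then have "card F0 * card (Orb f \<inter> X) \<le> k * card (Orb f \<inter> X)" by (rule mult_le_mono1)
    then have le: "card (Orb f) \<le> k * card (Orb f \<inter> X)" using f(2) by (rule le_trans[rotated])
    have fF: "f \<in> F" "finite (Orb f)" using f(1) unfolding F0_def Orb_def by blast+
    have fU: "f \<in> U" using fF(1) FU(1) by blast
    have "f \<in> Y" unfolding Y_def using fU fF(2) le by blast
    then show ?thesis using fF(1) by blast
  qed
  define Os where "Os = Orb ` Y"
  have meetX: "Orb u \<inter> X \<noteq> {}" if "u \<in> Y" for u
  proof -
    have "u \<in> Orb u" "finite (Orb u)" using self that Y_def by auto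
    then have "card (Orb u) > 0" by (simp add: card_gt_0_iff) blast
    then have "card (Orb u \<inter> X) \<noteq> 0" using that Y_def by auto
    then show ?thesis by auto
  qed
  have OsX: "Os \<subseteq> Orb ` X"
  proof
    fix Ob assume "Ob \<in> Os"
    then obtain u where u: "u \<in> Y" "Ob = Orb u" using Os_def by auto
    obtain x where x: "x \<in> Orb u" "x \<in> X" using meetX[OF u(1)] by auto
    have "Orb x = Orb u" using orb_eq x u Y_def Orb_def by auto
    then show "Ob \<in> Orb ` X" using x u by auto
  qed
  have finOs: "finite Os" using OsX X_fin finite_subset by blast
  have YU: "Y = \<Union>Os"
  proof
    show "Y \<subseteq> \<Union>Os" using self Y_def Os_def by auto
    show "\<Union>Os \<subseteq> Y" using closed Os_def by auto
  qed
  have finO: "\<forall>Ob\<in>Os. finite Ob" using Os_def Y_def by auto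
  have cardO: "\<forall>Ob\<in>Os. card Ob \<le> k * card (Ob \<inter> X)" using Os_def Y_def by auto
  have disj: "\<forall>B1\<in>Os. \<forall>B2\<in>Os. B1 \<noteq> B2 \<longrightarrow> B1 \<inter> B2 = {}"
  proof (intro ballI impI)
    fix B1 B2 assume Ob: "B1 \<in> Os" "B2 \<in> Os" "B1 \<noteq> B2"
    obtain u1 where u1: "u1 \<in> Y" "B1 = Orb u1" using Ob Os_def by auto
    obtain u2 where u2: "u2 \<in> Y" "B2 = Orb u2" using Ob Os_def by auto
    show "B1 \<inter> B2 = {}"
    proof (rule ccontr)
      assume "B1 \<inter> B2 \<noteq> {}"
      then obtain w where w: "w \<in> B1" "w \<in> B2" by auto
      have "Orb w = B1" using orb_eq w u1 Y_def Orb_def by auto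
      moreover have "Orb w = B2" using orb_eq w u2 Y_def Orb_def by auto
      ultimately show False using Ob by simp
    qed
  qed
  have "card (\<Union>((\<lambda>Ob. Ob) ` Os)) = (\<Sum>Ob\<in>Os. card Ob)"
    by (rule card_UN_disjoint[OF finOs]) (use finO disj in blast)+
  then have "card Y = (\<Sum>Ob\<in>Os. card Ob)" using YU by simp
  also have "\<dots> \<le> (\<Sum>Ob\<in>Os. k * card (Ob \<inter> X))" using cardO by (intro sum_mono) auto
  also have "\<dots> = k * (\<Sum>Ob\<in>Os. card (Ob \<inter> X))" by (simp add: sum_distrib_left)
  also have "(\<Sum>Ob\<in>Os. card (Ob \<inter> X)) = card (\<Union>Ob\<in>Os. Ob \<inter> X)"
    by (rule card_UN_disjoint[OF finOs, symmetric]) (use X_fin disj in blast)+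
  also have "card (\<Union>Ob\<in>Os. Ob \<inter> X) \<le> card X" using X_fin by (intro card_mono) auto
  finally have cY: "card Y \<le> card X * k" by (simp add: mult.commute)
  have fY: "finite Y" unfolding YU by (rule finite_Union[OF finOs]) (use finO in blast)
  have sY: "Y \<subseteq> U" unfolding Y_def by blast
  have cY2: "card Y \<le> card X * (SUP F\<in>\<F>. card F)" using cY unfolding k_def .
  have invY: "\<forall>g\<in>carrier G. \<phi> g ` Y = Y" using inv by blast
  have hitY: "\<forall>F\<in>\<F>. Y \<inter> F \<noteq> {}" using hit by blast
  show ?thesis
    by (rule exI[of _ Y]) (intro conjI sY invY hitY fY cY2)
qed

end
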